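(* Let $\mathcal J=\mathbb N\times(\mathbb N\cup\{\infty\})$ be Johnstone's dcpo, equipped with its Scott topology, and let $\mu$ be the map on the Scott-open subsets of $\mathcal J$ given by $\mu(U)=1$ if $U\neq\emptyset$ and $\mu(\emptyset)=0$. Then $\mu$ is a point-continuous valuation on $\mathcal J$ that is not a minimal valuation.
   Context: Johnstone's dcpo: $\mathcal J=\mathbb N\times(\mathbb N\cup\{\infty\})$ ($\infty$ is a new element above all natural numbers), ordered by $(a,b)\le(c,d)$ iff either ($a=c$ and $b\le d$) or ($d=\infty$ and $b\le c$). For a topological space $X$ with lattice of open sets $\mathcal O X$, a valuation is a map $\nu:\mathcal OX\to[0,\infty]$ with $\nu(\emptyset)=0$, monotone, and modular ($\nu(U)+\nu(V)=\nu(U\cup V)+\nu(U\cap V)$); it is continuous if it preserves suprema of directed families of open sets. Continuous valuations are ordered pointwise (stochastic order), forming a dcpo $\mathcal VX$ in which directed suprema are pointwise. $\delta_x$ is the Dirac valuation ($\delta_x(U)=1$ if $x\in U$, else $0$). A simple valuation is a finite sum $\sum_{i=1}^n r_i\delta_{x_i}$ with $r_i\in[0,\infty)$. The minimal valuations are the elements of the smallest subset of $\mathcal VX$ containing all simple valuations and closed under directed suprema in $\mathcal VX$. A valuation $\nu$ is point-continuous if for every open $U$ and every real $r$ with $0\le r<\nu(U)$ there is a finite subset $A\subseteq U$ such that $\nu(V)>r$ for every open $V\supseteq A$. *)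

theory Defs
  imports "HOL-Analysis.Analysis" "HOL-Library.Extended_Nat" "HOL-Library.Extended_Nonnegative_Real"
begin

definition directed_wrt :: "('a \<Rightarrow> 'a \<Rightarrow> bool) \<Rightarrow> 'a set \<Rightarrow> bool" where
  "directed_wrt le D \<longleftrightarrow> D \<noteq> {} \<and> (\<forall>x\<in>D. \<forall>y\<in>D. \<exists>z\<in>D. le x z \<and> le y z)"

definition is_lub :: "('a \<Rightarrow> 'a \<Rightarrow> bool) \<Rightarrow> 'a set \<Rightarrow> 'a \<Rightarrow> bool" where
  "is_lub le D s \<longleftrightarrow> (\<forall>x\<in>D. le x s) \<and> (\<forall>u. (\<forall>x\<in>D. le x u) \<longrightarrow> le s u)"

definition scott_open :: "('a \<Rightarrow> 'a \<Rightarrow> bool) \<Rightarrow> 'a set \<Rightarrow> bool" where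
  "scott_open le U \<longleftrightarrow>
     (\<forall>x y. x \<in> U \<and> le x y \<longrightarrow> y \<in> U) \<and>
     (\<forall>D s. directed_wrt le D \<and> is_lub le D s \<and> s \<in> U \<longrightarrow> D \<inter> U \<noteq> {})"

definition scott_topology :: "('a \<Rightarrow> 'a \<Rightarrow> bool) \<Rightarrow> 'a topology" where
  "scott_topology le = topology (scott_open le)"

definition johnstone_le :: "nat \<times> enat \<Rightarrow> nat \<times> enat \<Rightarrow> bool" where
  "johnstone_le p q \<longleftrightarrow>
     (fst p = fst q \<and> snd p \<le> snd q) \<or> (snd q = \<infinity> \<and> snd p \<le> enat (fst q))"

definition johnstone_top :: "(nat \<times> enat) topology" where
  "johnstone_top = scott_topology johnstone_le"

definition valuation :: "'a topology \<Rightarrow> ('a set \<Rightarrow> ennreal) \<Rightarrow> bool" where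
  "valuation X \<nu> \<longleftrightarrow>
     \<nu> {} = 0 \<and>
     (\<forall>U V. openin X U \<and> openin X V \<and> U \<subseteq> V \<longrightarrow> \<nu> U \<le> \<nu> V) \<and>
     (\<forall>U V. openin X U \<and> openin X V \<longrightarrow> \<nu> U + \<nu> V = \<nu> (U \<union> V) + \<nu> (U \<inter> V))"

definition continuous_valuation :: "'a topology \<Rightarrow> ('a set \<Rightarrow> ennreal) \<Rightarrow> bool" where
  "continuous_valuation X \<nu> \<longleftrightarrow> valuation X \<nu> \<and>
     (\<forall>\<U>. \<U> \<noteq> {} \<and> (\<forall>U\<in>\<U>. openin X U) \<and> (\<forall>U\<in>\<U>. \<forall>V\<in>\<U>. \<exists>W\<in>\<U>. U \<subseteq> W \<and> V \<subseteq> W)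
          \<longrightarrow> \<nu> (\<Union>\<U>) = (SUP U\<in>\<U>. \<nu> U))"

definition dirac :: "'a \<Rightarrow> 'a set \<Rightarrow> ennreal" where
  "dirac x U = (if x \<in> U then 1 else 0)"

text \<open>Valuations are compared only on open sets; we normalise them to 0 off the open sets.\<close>
definition vrestrict :: "'a topology \<Rightarrow> ('a set \<Rightarrow> ennreal) \<Rightarrow> 'a set \<Rightarrow> ennreal" where
  "vrestrict X \<nu> U = (if openin X U then \<nu> U else 0)"

inductive_set minimal_vals :: "'a topology \<Rightarrow> ('a set \<Rightarrow> ennreal) set" for X where
  simple: "(\<forall>i<n. (x :: nat \<Rightarrow> 'a) i \<in> topspace X \<and> r i \<ge> (0::real)) \<Longrightarrow>
           vrestrict X (\<lambda>U. \<Sum>i<n. ennreal (r i) * dirac (x i) U) \<in> minimal_vals X"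
| dsup: "(\<forall>\<nu>\<in>D. \<nu> \<in> minimal_vals X) \<Longrightarrow> D \<noteq> {} \<Longrightarrow>
         (\<forall>\<nu>1\<in>D. \<forall>\<nu>2\<in>D. \<exists>\<nu>3\<in>D. \<forall>U. openin X U \<longrightarrow> \<nu>1 U \<le> \<nu>3 U \<and> \<nu>2 U \<le> \<nu>3 U) \<Longrightarrow>
         vrestrict X (\<lambda>U. SUP \<nu>\<in>D. \<nu> U) \<in> minimal_vals X"

definition minimal_valuation :: "'a topology \<Rightarrow> ('a set \<Rightarrow> ennreal) \<Rightarrow> bool" where
  "minimal_valuation X \<nu> \<longleftrightarrow> vrestrict X \<nu> \<in> minimal_vals X"

definition point_continuous :: "'a topology \<Rightarrow> ('a set \<Rightarrow> ennreal) \<Rightarrow> bool" where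
  "point_continuous X \<nu> \<longleftrightarrow>
     (\<forall>U r. openin X U \<and> 0 \<le> r \<and> ennreal r < \<nu> U \<longrightarrow>
        (\<exists>A. finite A \<and> A \<subseteq> U \<and> (\<forall>V. openin X V \<and> A \<subseteq> V \<longrightarrow> \<nu> V > ennreal r)))"

end

theory Submission
  imports Defs
begin


lemma istopology_scott: "istopology (scott_open le)"
  unfolding istopology_def
proof (intro conjI allI impI)
  fix S T assume S: "scott_open le S" and T: "scott_open le T"
  show "scott_open le (S \<inter> T)"
    unfolding scott_open_def
  proof (intro conjI allI impI)
    fix x y assume "x \<in> S \<inter> T \<and> le x y" then show "y \<in> S \<inter> T"
      using S T unfolding scott_open_def by blast
  next
    fix D s assume a: "directed_wrt le D \<and> is_lub le D s \<and> s \<in> S \<inter> T"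
    then obtain x where x: "x \<in> D" "x \<in> S" using S unfolding scott_open_def by blast
    obtain y where y: "y \<in> D" "y \<in> T" using a T unfolding scott_open_def by blast
    obtain z where "z \<in> D" "le x z" "le y z" using a x y unfolding directed_wrt_def by blast
    then show "D \<inter> (S \<inter> T) \<noteq> {}" using S T x y unfolding scott_open_def by blast
  qed
next
  fix K assume K: "\<forall>k\<in>K. scott_open le k"
  show "scott_open le (\<Union>K)"
    unfolding scott_open_def
  proof (intro conjI allI impI)
    fix x y assume "x \<in> \<Union>K \<and> le x y" then show "y \<in> \<Union>K"
      using K unfolding scott_open_def by blast
  next
    fix D s assume a: "directed_wrt le D \<and> is_lub le D s \<and> s \<in> \<Union>K"
    then obtain k where "k \<in> K" "s \<in> k" by blast
    then show "D \<inter> \<Union>K \<noteq> {}" using a K unfolding scott_open_def by blast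
  qed
qed

lemma openin_J: "openin johnstone_top U \<longleftrightarrow> scott_open johnstone_le U"
  unfolding johnstone_top_def scott_topology_def topology_inverse'[OF istopology_scott] ..

lemma J_open_intro:
  assumes up: "\<And>p q. p \<in> U \<Longrightarrow> johnstone_le p q \<Longrightarrow> q \<in> U"
    and col: "\<And>a. (a, \<infinity>) \<in> U \<Longrightarrow> \<exists>j. (a, enat j) \<in> U"
  shows "openin johnstone_top U"
  unfolding openin_J scott_open_def
proof (intro conjI allI impI)
  fix x y assume "x \<in> U \<and> johnstone_le x y" then show "y \<in> U" using up by blast
next
  fix D s assume a: "directed_wrt johnstone_le D \<and> is_lub johnstone_le D s \<and> s \<in> U"
  then have Dne: "D \<noteq> {}" and ub: "\<And>x. x \<in> D \<Longrightarrow> johnstone_le x s"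
    and least: "\<And>u. (\<forall>x\<in>D. johnstone_le x u) \<Longrightarrow> johnstone_le s u" and sU: "s \<in> U"
    unfolding directed_wrt_def is_lub_def by auto
  obtain c d where s: "s = (c, d)" by fastforce
  show "D \<inter> U \<noteq> {}"
  proof (cases d)
    case (enat d')
    have sub: "D \<subseteq> {(c, enat e) | e. e \<le> d'}"
    proof
      fix x assume "x \<in> D"
      then have "johnstone_le x s" by (rule ub)
      then show "x \<in> {(c, enat e) | e. e \<le> d'}" using s enat unfolding johnstone_le_def
        by (cases x; cases "snd x"; auto)
    qed
    have fin: "finite (snd ` D)"
      by (rule finite_subset[of _ "enat ` {..d'}"]) (use sub in auto)
    obtain x where xD: "x \<in> D" and xmax: "\<And>y. y \<in> D \<Longrightarrow> snd y \<le> snd x"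
      using Max_in[OF fin] Max_ge[OF fin] Dne by (metis (no_types, lifting) image_iff imageI image_is_empty)
    have "\<forall>y\<in>D. johnstone_le y x"
    proof
      fix y assume "y \<in> D"
      then have "fst y = fst x" using sub xD by (smt (verit, best) fstI mem_Collect_eq subset_iff)
      then show "johnstone_le y x" using xmax[OF \<open>y \<in> D\<close>] unfolding johnstone_le_def by auto
    qed
    then have "johnstone_le s x" by (rule least)
    then have "x \<in> U" using up sU by blast
    then show ?thesis using xD by blast
  next
    case infinity
    obtain j where j: "(c, enat j) \<in> U" using col sU s infinity by blast
    show ?thesis
    proof (rule ccontr)
      assume none: "\<not> ?thesis"
      have bnd: "\<forall>x\<in>D. \<exists>b. snd x = enat b \<and> (fst x = c \<longrightarrow> b < j)"
      proof
        fix x assume xD: "x \<in> D"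
        have "johnstone_le x s" using ub xD .
        show "\<exists>b. snd x = enat b \<and> (fst x = c \<longrightarrow> b < j)"
        proof (cases "snd x")
          case (enat b)
          show ?thesis
          proof (intro exI conjI impI)
            show "snd x = enat b" by fact
            assume "fst x = c"
            show "b < j"
            proof (rule ccontr)
              assume "\<not> b < j"
              then have "johnstone_le (c, enat j) x" using \<open>fst x = c\<close> enat
                unfolding johnstone_le_def by auto
              then have "x \<in> U" using up j by blast
              then show False using none xD by blast
            qed
          qed
        next
          case infinity
          then have "fst x = c" using \<open>johnstone_le x s\<close> s \<open>d = \<infinity>\<close> unfolding johnstone_le_def by auto
          then have "x = s" using infinity s \<open>d = \<infinity>\<close> by (cases x) auto
          then show ?thesis using none xD sU by blast
        qed
      qed
      have "\<forall>x\<in>D. snd x \<le> enat (j + c)"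
      proof
        fix x assume xD: "x \<in> D"
        obtain b where b: "snd x = enat b" "fst x = c \<longrightarrow> b < j" using bnd xD by blast
        have "johnstone_le x s" using ub xD .
        then have "fst x = c \<or> snd x \<le> enat c" using s \<open>d = \<infinity>\<close> unfolding johnstone_le_def by auto
        then show "snd x \<le> enat (j + c)" using b by auto
      qed
      then have "\<forall>x\<in>D. johnstone_le x (Suc (j + c), \<infinity>)"
        unfolding johnstone_le_def by (auto intro: order_trans)
      then have "johnstone_le s (Suc (j + c), \<infinity>)" by (rule least)
      then show False using s \<open>d = \<infinity>\<close> unfolding johnstone_le_def by auto
    qed
  qed
qed



definition Vs :: "nat \<Rightarrow> (nat \<times> enat) set" where
  "Vs n = {p. enat (fst p) \<le> snd p \<and> n \<le> fst p}"
definition Es :: "nat \<Rightarrow> (nat \<times> enat) set" where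
  "Es k = {p. enat (fst p) \<le> snd p \<and> enat k \<le> snd p}"
definition Gs :: "nat \<Rightarrow> nat \<Rightarrow> (nat \<times> enat) set" where
  "Gs n k = {p. fst p < n \<and> enat k \<le> snd p} \<union> Vs k"
definition EBs :: "nat \<Rightarrow> nat \<Rightarrow> (nat \<times> enat) set" where
  "EBs n k = {p. enat (fst p) \<le> snd p \<and> (enat k \<le> snd p \<or> fst p < n)}"

lemma open_Vs: "openin johnstone_top (Vs n)"
proof (rule J_open_intro)
  fix p q assume "p \<in> Vs n" "johnstone_le p q" then show "q \<in> Vs n"
  proof -
    have h: "enat (fst p) \<le> snd p" "n \<le> fst p" using \<open>p \<in> Vs n\<close> unfolding Vs_def by auto
    have "(fst p = fst q \<and> snd p \<le> snd q) \<or> (snd q = \<infinity> \<and> snd p \<le> enat (fst q))"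
      using \<open>johnstone_le p q\<close> unfolding johnstone_le_def .
    then show ?thesis
    proof
      assume a: "fst p = fst q \<and> snd p \<le> snd q"
      have "enat (fst q) \<le> snd q" using h(1) a by (metis order_trans)
      moreover have "n \<le> fst q" using h(2) a by simp
      ultimately show ?thesis unfolding Vs_def by blast
    next
      assume a: "snd q = \<infinity> \<and> snd p \<le> enat (fst q)"
      then have "enat (fst p) \<le> enat (fst q)" using h(1) by (metis order_trans)
      then have "n \<le> fst q" using h(2) by simp
      then show ?thesis using a unfolding Vs_def by simp
    qed
  qed
next
  fix a assume "(a, \<infinity>) \<in> Vs n" then show "\<exists>j. (a, enat j) \<in> Vs n"
    by (intro exI[of _ a]) (auto simp: Vs_def)
qed

lemma open_Es: "openin johnstone_top (Es k)"
proof (rule J_open_intro)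
  fix p q assume "p \<in> Es k" "johnstone_le p q" then show "q \<in> Es k"
  proof -
    have h: "enat (fst p) \<le> snd p" "enat k \<le> snd p" using \<open>p \<in> Es k\<close> unfolding Es_def by auto
    have "(fst p = fst q \<and> snd p \<le> snd q) \<or> (snd q = \<infinity> \<and> snd p \<le> enat (fst q))"
      using \<open>johnstone_le p q\<close> unfolding johnstone_le_def .
    then show ?thesis
    proof
      assume a: "fst p = fst q \<and> snd p \<le> snd q"
      have "enat (fst q) \<le> snd q" using h(1) a by (metis order_trans)
      moreover have "enat k \<le> snd q" using h(2) a by (metis order_trans)
      ultimately show ?thesis unfolding Es_def by blast
    next
      assume "snd q = \<infinity> \<and> snd p \<le> enat (fst q)"
      then show ?thesis unfolding Es_def by simp
    qed
  qed
next
  fix a assume "(a, \<infinity>) \<in> Es k" then show "\<exists>j. (a, enat j) \<in> Es k"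
    by (intro exI[of _ "max a k"]) (auto simp: Es_def)
qed

lemma open_Gs: "openin johnstone_top (Gs n k)"
proof (rule J_open_intro)
  fix p q assume "p \<in> Gs n k" "johnstone_le p q" then show "q \<in> Gs n k"
  proof -
    have pq: "(fst p = fst q \<and> snd p \<le> snd q) \<or> (snd q = \<infinity> \<and> snd p \<le> enat (fst q))"
      using \<open>johnstone_le p q\<close> unfolding johnstone_le_def .
    show ?thesis
    proof (cases "p \<in> Vs k")
      case True
      then have "q \<in> Vs k" using open_Vs \<open>johnstone_le p q\<close> unfolding openin_J scott_open_def by blast
      then show ?thesis unfolding Gs_def by blast
    next
      case False
      then have h: "fst p < n" "enat k \<le> snd p" using \<open>p \<in> Gs n k\<close> unfolding Gs_def by auto
      show ?thesis
      proof (cases "fst p = fst q \<and> snd p \<le> snd q")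
        case True
        then have "fst q < n" "enat k \<le> snd q" using h by (auto intro: order_trans)
        then show ?thesis unfolding Gs_def by blast
      next
        case False
        then have "snd q = \<infinity>" "snd p \<le> enat (fst q)" using pq by auto
        then have "enat k \<le> enat (fst q)" using h by (metis order_trans)
        then have "q \<in> Vs k" unfolding Vs_def using \<open>snd q = \<infinity>\<close> by auto
        then show ?thesis unfolding Gs_def by blast
      qed
    qed
  qed
next
  fix a assume "(a, \<infinity>) \<in> Gs n k" then show "\<exists>j. (a, enat j) \<in> Gs n k"
  proof (cases "a < n")
    case True
    then have "(a, enat k) \<in> Gs n k" unfolding Gs_def by simp
    then show ?thesis by blast
  next
    case False
    then have "(a, \<infinity>) \<in> Vs k" using \<open>(a, \<infinity>) \<in> Gs n k\<close> unfolding Gs_def by simp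
    then have "(a, enat a) \<in> Gs n k" unfolding Gs_def Vs_def by simp
    then show ?thesis by blast
  qed
qed

lemma open_EBs: "openin johnstone_top (EBs n k)"
proof (rule J_open_intro)
  fix p q assume "p \<in> EBs n k" "johnstone_le p q" then show "q \<in> EBs n k"
  proof -
    have h: "enat (fst p) \<le> snd p" "enat k \<le> snd p \<or> fst p < n" using \<open>p \<in> EBs n k\<close> unfolding EBs_def by auto
    have "(fst p = fst q \<and> snd p \<le> snd q) \<or> (snd q = \<infinity> \<and> snd p \<le> enat (fst q))"
      using \<open>johnstone_le p q\<close> unfolding johnstone_le_def .
    then show ?thesis
    proof
      assume a: "fst p = fst q \<and> snd p \<le> snd q"
      have "enat (fst q) \<le> snd q" using h(1) a by (metis order_trans)
      moreover have "enat k \<le> snd q \<or> fst q < n" using h(2) a by (metis order_trans)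
      ultimately show ?thesis unfolding EBs_def by blast
    next
      assume "snd q = \<infinity> \<and> snd p \<le> enat (fst q)"
      then show ?thesis unfolding EBs_def by simp
    qed
  qed
next
  fix a assume "(a, \<infinity>) \<in> EBs n k" then show "\<exists>j. (a, enat j) \<in> EBs n k"
    by (intro exI[of _ "max a k"]) (auto simp: EBs_def)
qed

lemma Vs_anti: "n \<le> m \<Longrightarrow> Vs m \<subseteq> Vs n" unfolding Vs_def by auto
lemma S1: "n \<le> k \<Longrightarrow> Es k \<subseteq> Gs n k \<union> (Es k \<inter> Vs n)"
  unfolding Es_def Gs_def Vs_def by auto
lemma S2a: "EBs n k \<union> Vs n = Vs 0"
  unfolding EBs_def Vs_def by auto
lemma S2b: "EBs n k \<inter> Vs n = Es k \<inter> Vs n"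
  unfolding EBs_def Vs_def Es_def by auto
lemma S3a: assumes nk: "n \<le> k" shows "Gs n k \<union> (Es k \<inter> Vs n) \<subseteq> Es k \<union> Vs k"
proof
  fix p assume p: "p \<in> Gs n k \<union> (Es k \<inter> Vs n)"
  show "p \<in> Es k \<union> Vs k"
  proof (cases "p \<in> Vs k")
    case False
    then have h: "p \<in> Es k \<or> (fst p < n \<and> enat k \<le> snd p)" using p unfolding Gs_def by blast
    have "p \<in> Es k"
    proof (cases "p \<in> Es k")
      case False
      then have "fst p < n" "enat k \<le> snd p" using h by auto
      then have "enat (fst p) \<le> enat k" using nk by simp
      then have "enat (fst p) \<le> snd p" using \<open>enat k \<le> snd p\<close> by (metis order_trans)
      then show ?thesis using \<open>enat k \<le> snd p\<close> unfolding Es_def by simp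
    qed
    then show ?thesis by blast
  qed simp
qed
lemma S3b: "Gs n k \<inter> (Es k \<inter> Vs n) \<subseteq> Vs k"
  unfolding Es_def Gs_def Vs_def by auto

lemma Vs_nonempty: "(n, \<infinity>) \<in> Vs n" unfolding Vs_def by auto

lemma chain_lub: "is_lub johnstone_le {(a, enat j) | j. True} (a, \<infinity>)"
  unfolding is_lub_def
proof (intro conjI allI impI ballI)
  fix x assume "x \<in> {(a, enat j) | j. True}" then show "johnstone_le x (a, \<infinity>)"
    unfolding johnstone_le_def by auto
next
  fix u assume ub: "\<forall>x\<in>{(a, enat j) | j. True}. johnstone_le x u"
  obtain c d where u: "u = (c, d)" by fastforce
  have "johnstone_le (a, enat (Suc c)) u" using ub by auto
  then have "a = c" using u unfolding johnstone_le_def by auto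
  have "d = \<infinity>"
  proof (cases d)
    case (enat d')
    have "johnstone_le (a, enat (Suc d')) u" using ub by auto
    then show ?thesis using u enat unfolding johnstone_le_def by auto
  qed
  then show "johnstone_le (a, \<infinity>) u" using u \<open>a = c\<close> unfolding johnstone_le_def by auto
qed

lemma chain_dir: "directed_wrt johnstone_le {(a, enat j) | j. True}"
  unfolding directed_wrt_def
proof (intro conjI ballI)
  show "{(a, enat j) | j. True} \<noteq> {}" by auto
next
  fix x y assume "x \<in> {(a, enat j) | j. True}" "y \<in> {(a, enat j) | j. True}"
  then obtain i j where "x = (a, enat i)" "y = (a, enat j)" by auto
  then show "\<exists>z\<in>{(a, enat j) | j. True}. johnstone_le x z \<and> johnstone_le y z"
    by (intro bexI[of _ "(a, enat (max i j))"]) (auto simp: johnstone_le_def)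
qed

lemma open_tail:
  assumes U: "openin johnstone_top U" and ne: "U \<noteq> {}"
  shows "\<exists>N. \<forall>m\<ge>N. (m, \<infinity>) \<in> U"
proof -
  obtain a b where ab: "(a, b) \<in> U" using ne by fastforce
  have so: "scott_open johnstone_le U" using U openin_J by blast
  have "(a, \<infinity>) \<in> U" using so ab unfolding scott_open_def johnstone_le_def
    by (metis enat_ord_code(3) fst_conv snd_conv)
  then have "{(a, enat j) | j. True} \<inter> U \<noteq> {}"
    using so chain_lub chain_dir unfolding scott_open_def by blast
  then obtain j where j: "(a, enat j) \<in> U" by auto
  have "\<forall>m\<ge>j. (m, \<infinity>) \<in> U"
  proof (intro allI impI)
    fix m assume "j \<le> m"
    then have "johnstone_le (a, enat j) (m, \<infinity>)" unfolding johnstone_le_def by auto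
    then show "(m, \<infinity>) \<in> U" using so j unfolding scott_open_def by blast
  qed
  then show ?thesis by blast
qed

lemma open_meet:
  assumes "openin johnstone_top U" "U \<noteq> {}" "openin johnstone_top V" "V \<noteq> {}"
  shows "U \<inter> V \<noteq> {}"
proof -
  obtain N1 where "\<forall>m\<ge>N1. (m, \<infinity>) \<in> U" using open_tail assms by blast
  moreover obtain N2 where "\<forall>m\<ge>N2. (m, \<infinity>) \<in> V" using open_tail assms by blast
  ultimately have "(max N1 N2, \<infinity>) \<in> U \<inter> V" by auto
  then show ?thesis by blast
qed



definition mono_op :: "((nat \<times> enat) set \<Rightarrow> ennreal) \<Rightarrow> bool" where
  "mono_op \<nu> \<longleftrightarrow> (\<forall>U V. openin johnstone_top U \<and> openin johnstone_top V \<and> U \<subseteq> V \<longrightarrow> \<nu> U \<le> \<nu> V)"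
definition modl :: "((nat \<times> enat) set \<Rightarrow> ennreal) \<Rightarrow> bool" where
  "modl \<nu> \<longleftrightarrow> (\<forall>U V. openin johnstone_top U \<and> openin johnstone_top V \<longrightarrow> \<nu> U + \<nu> V = \<nu> (U \<union> V) + \<nu> (U \<inter> V))"

lemma subadd:
  assumes "modl \<nu>" "openin johnstone_top U" "openin johnstone_top V"
  shows "\<nu> (U \<union> V) \<le> \<nu> U + \<nu> V"
proof -
  have "\<nu> (U \<union> V) \<le> \<nu> (U \<union> V) + \<nu> (U \<inter> V)" by simp
  also have "\<dots> = \<nu> U + \<nu> V" using assms unfolding modl_def by metis
  finally show ?thesis .
qed

lemma key:
  fixes \<sigma> \<tau> :: "(nat \<times> enat) set \<Rightarrow> ennreal"
  assumes ms: "mono_op \<sigma>" and mods: "modl \<sigma>" and mt: "mono_op \<tau>" and modt: "modl \<tau>"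
    and le: "\<And>U. openin johnstone_top U \<Longrightarrow> \<sigma> U \<le> \<tau> U" and nk: "n \<le> k"
  shows "\<sigma> (Es k) + \<sigma> (Vs 0) + \<tau> (Vs n) \<le> \<tau> (Es k) + 2 * \<tau> (Vs k) + \<tau> (Vs 0) + \<sigma> (Vs n)"
proof -
  define E where "E = Es k"
  define G where "G = Gs n k"
  define B where "B = EBs n k"
  define Vn where "Vn = Vs n"
  define Vk where "Vk = Vs k"
  define V0 where "V0 = Vs 0"
  have oE: "openin johnstone_top E" and oG: "openin johnstone_top G" and oB: "openin johnstone_top B"
    and oVn: "openin johnstone_top Vn" and oVk: "openin johnstone_top Vk" and oV0: "openin johnstone_top V0"
    unfolding E_def G_def B_def Vn_def Vk_def V0_def
    by (auto simp: open_Es open_Gs open_EBs open_Vs)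
  have oEVn: "openin johnstone_top (E \<inter> Vn)" using oE oVn by auto
  have oGEV: "openin johnstone_top (G \<union> (E \<inter> Vn))" using oG oEVn by auto
  have oEVk: "openin johnstone_top (E \<union> Vk)" using oE oVk by auto
  have a1: "\<And>\<nu>. modl \<nu> \<Longrightarrow> \<nu> B + \<nu> Vn = \<nu> V0 + \<nu> (E \<inter> Vn)"
  proof -
    fix \<nu> :: "(nat \<times> enat) set \<Rightarrow> ennreal" assume "modl \<nu>"
    then have "\<nu> B + \<nu> Vn = \<nu> (B \<union> Vn) + \<nu> (B \<inter> Vn)" using oB oVn unfolding modl_def by blast
    also have "B \<union> Vn = V0" unfolding B_def Vn_def V0_def by (rule S2a)
    also have "B \<inter> Vn = E \<inter> Vn" unfolding B_def Vn_def E_def by (rule S2b)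
    finally show "\<nu> B + \<nu> Vn = \<nu> V0 + \<nu> (E \<inter> Vn)" .
  qed
  have s1: "\<sigma> E \<le> \<sigma> G + \<sigma> (E \<inter> Vn)"
  proof -
    have "\<sigma> E \<le> \<sigma> (G \<union> (E \<inter> Vn))"
      using ms oE oGEV S1[OF nk] unfolding mono_op_def E_def G_def Vn_def by blast
    also have "\<dots> \<le> \<sigma> G + \<sigma> (E \<inter> Vn)" by (rule subadd[OF mods oG oEVn])
    finally show ?thesis .
  qed
  have s2: "\<sigma> E + \<sigma> V0 \<le> \<sigma> G + \<sigma> B + \<sigma> Vn"
  proof -
    have "\<sigma> E + \<sigma> V0 \<le> \<sigma> G + \<sigma> (E \<inter> Vn) + \<sigma> V0" using s1 by (simp add: add_right_mono)
    also have "\<dots> = \<sigma> G + (\<sigma> B + \<sigma> Vn)" using a1[OF mods] by (simp add: ac_simps)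
    finally show ?thesis by (simp add: ac_simps)
  qed
  have t1: "\<tau> G + \<tau> (E \<inter> Vn) \<le> \<tau> E + 2 * \<tau> Vk"
  proof -
    have "\<tau> G + \<tau> (E \<inter> Vn) = \<tau> (G \<union> (E \<inter> Vn)) + \<tau> (G \<inter> (E \<inter> Vn))"
      using modt oG oEVn unfolding modl_def by blast
    also have "\<tau> (G \<union> (E \<inter> Vn)) \<le> \<tau> (E \<union> Vk)"
      using mt oGEV oEVk S3a[OF nk] unfolding mono_op_def E_def G_def Vn_def Vk_def by blast
    also have "\<tau> (G \<inter> (E \<inter> Vn)) \<le> \<tau> Vk"
      using mt oG oEVn oVk S3b unfolding mono_op_def E_def G_def Vn_def Vk_def by blast
    also have "\<tau> (E \<union> Vk) \<le> \<tau> E + \<tau> Vk" by (rule subadd[OF modt oE oVk])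
    finally show ?thesis unfolding mult_2 by (simp add: ac_simps add_mono)
  qed
  have t2: "\<tau> G + \<tau> B + \<tau> Vn \<le> \<tau> E + 2 * \<tau> Vk + \<tau> V0"
  proof -
    have "\<tau> G + \<tau> B + \<tau> Vn = \<tau> G + \<tau> (E \<inter> Vn) + \<tau> V0" using a1[OF modt] by (simp add: ac_simps)
    also have "\<dots> \<le> \<tau> E + 2 * \<tau> Vk + \<tau> V0" using t1 by (simp add: add_right_mono)
    finally show ?thesis .
  qed
  have "\<sigma> E + \<sigma> V0 + \<tau> Vn \<le> \<sigma> G + \<sigma> B + \<sigma> Vn + \<tau> Vn" using s2 by (simp add: add_right_mono)
  also have "\<dots> \<le> \<tau> G + \<tau> B + \<sigma> Vn + \<tau> Vn"
    using le[OF oG] le[OF oB] by (simp add: add_mono)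
  also have "\<dots> = (\<tau> G + \<tau> B + \<tau> Vn) + \<sigma> Vn" by (simp add: ac_simps)
  also have "\<dots> \<le> \<tau> E + 2 * \<tau> Vk + \<tau> V0 + \<sigma> Vn" using t2 by (simp add: add_right_mono)
  finally show ?thesis unfolding E_def Vn_def Vk_def V0_def .
qed

lemma arith_step:
  fixes A B X W W' a b c v :: ennreal
  assumes "A + b \<le> B + 2 * v + a" "X \<le> A + W" "W \<le> W'" "2 * c \<le> b" "a \<le> c" "c \<noteq> top"
  shows "X + c \<le> B + (W' + 2 * v)"
proof -
  have "c + (X + c) = X + 2 * c" unfolding mult_2 by (simp add: ac_simps)
  also have "\<dots> \<le> (A + W) + b" using assms(2,4) by (rule add_mono)
  also have "\<dots> = (A + b) + W" by (simp add: ac_simps)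
  also have "\<dots> \<le> (B + 2 * v + a) + W'" using assms(1,3) by (rule add_mono)
  also have "\<dots> \<le> (B + 2 * v + c) + W'" using assms(5) by (simp add: add_mono)
  also have "\<dots> = c + (B + (W' + 2 * v))" by (simp add: ac_simps)
  finally show ?thesis using assms(6) ennreal_add_left_cancel_le by auto
qed



definition small_tail :: "((nat \<times> enat) set \<Rightarrow> ennreal) \<Rightarrow> bool" where
  "small_tail \<nu> \<longleftrightarrow> (\<nu> UNIV < top \<longrightarrow> (\<forall>e>0. \<exists>n. \<nu> (Vs n) < ennreal e))"

lemma open_UNIV_J: "openin johnstone_top UNIV"
  unfolding openin_J scott_open_def directed_wrt_def by auto

lemma dirac_modular: "dirac x U + dirac x V = dirac x (U \<union> V) + dirac x (U \<inter> V)"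
  unfolding dirac_def by auto

lemma tail_from_bound:
  assumes "mono_op \<tau>" "small_tail \<tau>" "\<tau> UNIV < top" "e > 0"
  shows "\<exists>n\<ge>N. \<tau> (Vs n) < ennreal e"
proof -
  obtain n0 where n0: "\<tau> (Vs n0) < ennreal e" using assms unfolding small_tail_def by blast
  have "\<tau> (Vs (max n0 N)) \<le> \<tau> (Vs n0)"
    using assms(1) open_Vs Vs_anti[of n0 "max n0 N"] unfolding mono_op_def by auto
  then show ?thesis using n0 by (intro exI[of _ "max n0 N"]) auto
qed

lemma inv_simple:
  fixes x :: "nat \<Rightarrow> nat \<times> enat" and r :: "nat \<Rightarrow> real"
  assumes "\<forall>i<n. r i \<ge> 0"
  defines "\<nu> \<equiv> vrestrict johnstone_top (\<lambda>U. \<Sum>i<n. ennreal (r i) * dirac (x i) U)"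
  shows "mono_op \<nu> \<and> modl \<nu> \<and> small_tail \<nu>"
proof (intro conjI)
  show "mono_op \<nu>" unfolding mono_op_def
  proof (intro allI impI)
    fix U V assume uv: "openin johnstone_top U \<and> openin johnstone_top V \<and> U \<subseteq> V"
    have "(\<Sum>i<n. ennreal (r i) * dirac (x i) U) \<le> (\<Sum>i<n. ennreal (r i) * dirac (x i) V)"
    proof (rule sum_mono)
      fix i show "ennreal (r i) * dirac (x i) U \<le> ennreal (r i) * dirac (x i) V"
        using uv by (intro mult_left_mono) (auto simp: dirac_def)
    qed
    then show "\<nu> U \<le> \<nu> V" using uv unfolding \<nu>_def vrestrict_def by simp
  qed
  show "modl \<nu>" unfolding modl_def
  proof (intro allI impI)
    fix U V assume uv: "openin johnstone_top U \<and> openin johnstone_top V"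
    then have "openin johnstone_top (U \<union> V)" "openin johnstone_top (U \<inter> V)" by auto
    then show "\<nu> U + \<nu> V = \<nu> (U \<union> V) + \<nu> (U \<inter> V)"
    proof -
      have "(\<Sum>i<n. ennreal (r i) * dirac (x i) U) + (\<Sum>i<n. ennreal (r i) * dirac (x i) V)
          = (\<Sum>i<n. ennreal (r i) * (dirac (x i) U + dirac (x i) V))"
        unfolding sum.distrib[symmetric] by (rule sum.cong[OF refl], rule distrib_left[symmetric])
      also have "\<dots> = (\<Sum>i<n. ennreal (r i) * (dirac (x i) (U \<union> V) + dirac (x i) (U \<inter> V)))"
        by (simp only: dirac_modular[of _ U V])
      also have "\<dots> = (\<Sum>i<n. ennreal (r i) * dirac (x i) (U \<union> V)) + (\<Sum>i<n. ennreal (r i) * dirac (x i) (U \<inter> V))"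
        unfolding sum.distrib[symmetric] by (rule sum.cong[OF refl], rule distrib_left)
      finally show ?thesis using uv \<open>openin johnstone_top (U \<union> V)\<close> \<open>openin johnstone_top (U \<inter> V)\<close>
        unfolding \<nu>_def vrestrict_def by simp
    qed
  qed
  show "small_tail \<nu>" unfolding small_tail_def
  proof (intro impI allI)
    fix e :: real
    assume "e > 0"
    show "\<exists>m. \<nu> (Vs m) < ennreal e"
    proof -
      define N where "N = Suc (\<Sum>i<n. fst (x i))"
      have "\<And>i. i < n \<Longrightarrow> x i \<notin> Vs N"
      proof -
        fix i assume "i < n"
        then have "fst (x i) \<le> (\<Sum>i<n. fst (x i))"
          by (intro member_le_sum) auto
        then show "x i \<notin> Vs N" unfolding N_def Vs_def by auto
      qed
      then have "\<nu> (Vs N) = 0" unfolding \<nu>_def vrestrict_def dirac_def using open_Vs by simp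
      then show "\<exists>m. \<nu> (Vs m) < ennreal e" using \<open>e > 0\<close> by (intro exI[of _ N]) simp
    qed
  qed
qed



lemma inv_dsup:
  fixes D :: "((nat \<times> enat) set \<Rightarrow> ennreal) set"
  assumes IH: "\<forall>\<sigma>\<in>D. mono_op \<sigma> \<and> modl \<sigma> \<and> small_tail \<sigma>" and ne: "D \<noteq> {}"
    and dir: "\<forall>\<nu>1\<in>D. \<forall>\<nu>2\<in>D. \<exists>\<nu>3\<in>D. \<forall>U. openin johnstone_top U \<longrightarrow> \<nu>1 U \<le> \<nu>3 U \<and> \<nu>2 U \<le> \<nu>3 U"
  defines "\<nu> \<equiv> vrestrict johnstone_top (\<lambda>U. SUP \<sigma>\<in>D. \<sigma> U)"
  shows "mono_op \<nu> \<and> modl \<nu> \<and> small_tail \<nu>"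
proof -
  have nuV: "\<And>U. openin johnstone_top U \<Longrightarrow> \<nu> U = (SUP \<sigma>\<in>D. \<sigma> U)"
    unfolding \<nu>_def vrestrict_def by simp
  have sle: "\<And>\<sigma> U. \<sigma> \<in> D \<Longrightarrow> openin johnstone_top U \<Longrightarrow> \<sigma> U \<le> \<nu> U"
    using nuV by (metis SUP_upper)
  have mono: "mono_op \<nu>" unfolding mono_op_def
  proof (intro allI impI)
    fix U V assume uv: "openin johnstone_top U \<and> openin johnstone_top V \<and> U \<subseteq> V"
    have "(SUP \<sigma>\<in>D. \<sigma> U) \<le> (SUP \<sigma>\<in>D. \<sigma> V)"
      using IH uv unfolding mono_op_def by (intro SUP_mono) blast
    then show "\<nu> U \<le> \<nu> V" using uv nuV by simp
  qed
  have modl: "modl \<nu>" unfolding modl_def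
  proof (intro allI impI)
    fix U V assume uv: "openin johnstone_top U \<and> openin johnstone_top V"
    have o2: "openin johnstone_top (U \<union> V)" "openin johnstone_top (U \<inter> V)" using uv by auto
    have "(SUP \<sigma>\<in>D. \<sigma> U) + (SUP \<sigma>\<in>D. \<sigma> V) = (SUP \<sigma>\<in>D. \<sigma> U + \<sigma> V)"
    proof (rule SUP_add_directed_ennreal[symmetric])
      fix i j assume "i \<in> D" "j \<in> D"
      then obtain k where "k \<in> D" "\<forall>U. openin johnstone_top U \<longrightarrow> i U \<le> k U \<and> j U \<le> k U"
        using dir by blast
      then show "\<exists>k\<in>D. i U + j V \<le> k U + k V" using uv by (intro bexI[of _ k]) (auto intro: add_mono)
    qed
    also have "\<dots> = (SUP \<sigma>\<in>D. \<sigma> (U \<union> V) + \<sigma> (U \<inter> V))"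
      using IH uv unfolding modl_def by (intro SUP_cong) auto
    also have "\<dots> = (SUP \<sigma>\<in>D. \<sigma> (U \<union> V)) + (SUP \<sigma>\<in>D. \<sigma> (U \<inter> V))"
    proof (rule SUP_add_directed_ennreal)
      fix i j assume "i \<in> D" "j \<in> D"
      then obtain k where "k \<in> D" "\<forall>U. openin johnstone_top U \<longrightarrow> i U \<le> k U \<and> j U \<le> k U"
        using dir by blast
      then show "\<exists>k\<in>D. i (U \<union> V) + j (U \<inter> V) \<le> k (U \<union> V) + k (U \<inter> V)"
        using o2 by (intro bexI[of _ k]) (auto intro: add_mono)
    qed
    finally show "\<nu> U + \<nu> V = \<nu> (U \<union> V) + \<nu> (U \<inter> V)" using uv o2 nuV by simp
  qed
  have tail: "small_tail \<nu>" unfolding small_tail_def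
  proof (intro impI)
    assume fin: "\<nu> UNIV < top"
    show "\<forall>e>0. \<exists>n. \<nu> (Vs n) < ennreal e"
    proof (rule ccontr)
      assume "\<not> (\<forall>e>0. \<exists>n. \<nu> (Vs n) < ennreal e)"
      then obtain e :: real where e0: "e > 0" and big: "\<And>n. ennreal e \<le> \<nu> (Vs n)"
        by (auto simp: not_less)
      have sfin: "\<And>\<sigma>. \<sigma> \<in> D \<Longrightarrow> \<sigma> UNIV < top"
        using sle open_UNIV_J fin by (meson le_less_trans)
      have smono: "\<And>\<sigma>. \<sigma> \<in> D \<Longrightarrow> mono_op \<sigma>" and smodl: "\<And>\<sigma>. \<sigma> \<in> D \<Longrightarrow> modl \<sigma>"
        and stail: "\<And>\<sigma>. \<sigma> \<in> D \<Longrightarrow> small_tail \<sigma>" using IH by auto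
      define c where "c = ennreal (e / 4)"
      have ctop: "c \<noteq> top" unfolding c_def by simp
      have claim: "\<exists>\<tau>\<in>D. \<exists>N. \<forall>K\<ge>N. of_nat T * c \<le> \<tau> (Es K) + \<tau> (Vs 0) + of_nat (2 * T) * \<tau> (Vs K)"
        for T
      proof (induct T)
        case 0
        then show ?case using ne by auto
      next
        case (Suc T)
        then obtain \<tau> N where \<tau>D: "\<tau> \<in> D"
          and ih: "\<And>K. K \<ge> N \<Longrightarrow> of_nat T * c \<le> \<tau> (Es K) + \<tau> (Vs 0) + of_nat (2 * T) * \<tau> (Vs K)"
          by blast
        obtain n where nN: "n \<ge> N" and tn: "\<tau> (Vs n) < c"
          using tail_from_bound[OF smono[OF \<tau>D] stail[OF \<tau>D] sfin[OF \<tau>D], of "e / 4" N] e0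
          unfolding c_def by auto
        have "ennreal (e / 2) < ennreal e" using e0 by (simp add: ennreal_lessI)
        also have "\<dots> \<le> (SUP \<sigma>\<in>D. \<sigma> (Vs n))" using big[of n] nuV[OF open_Vs] by simp
        finally obtain \<sigma>' where \<sigma>'D: "\<sigma>' \<in> D" and s': "ennreal (e / 2) < \<sigma>' (Vs n)"
          by (auto simp: less_SUP_iff)
        obtain \<tau>' where \<tau>'D: "\<tau>' \<in> D"
          and le': "\<And>U. openin johnstone_top U \<Longrightarrow> \<tau> U \<le> \<tau>' U \<and> \<sigma>' U \<le> \<tau>' U"
          using dir \<tau>D \<sigma>'D by blast
        have b: "2 * c \<le> \<tau>' (Vs n)"
        proof -
          have "ennreal (e / 2) = ennreal (2 * (e / 4))" by simp
          also have "\<dots> = ennreal 2 * ennreal (e / 4)" by (rule ennreal_mult') simp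
          finally have "2 * c = ennreal (e / 2)" unfolding c_def by simp
          also have "\<dots> \<le> \<sigma>' (Vs n)" using s' by simp
          also have "\<dots> \<le> \<tau>' (Vs n)" using le'[OF open_Vs] by simp
          finally show ?thesis .
        qed
        have "\<forall>K\<ge>n. of_nat (Suc T) * c \<le> \<tau>' (Es K) + \<tau>' (Vs 0) + of_nat (2 * Suc T) * \<tau>' (Vs K)"
        proof (intro allI impI)
          fix K assume Kn: "K \<ge> n"
          have k: "\<tau> (Es K) + \<tau> (Vs 0) + \<tau>' (Vs n) \<le> \<tau>' (Es K) + 2 * \<tau>' (Vs K) + \<tau>' (Vs 0) + \<tau> (Vs n)"
            by (rule key[OF smono[OF \<tau>D] smodl[OF \<tau>D] smono[OF \<tau>'D] smodl[OF \<tau>'D]])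
               (use le' Kn in auto)
          have k': "(\<tau> (Es K) + \<tau> (Vs 0)) + \<tau>' (Vs n) \<le> (\<tau>' (Es K) + \<tau>' (Vs 0)) + 2 * \<tau>' (Vs K) + \<tau> (Vs n)"
            using k by (simp add: ac_simps)
          have W: "of_nat (2 * T) * \<tau> (Vs K) \<le> of_nat (2 * T) * \<tau>' (Vs K)"
            using le'[OF open_Vs] by (simp add: mult_left_mono)
          have "of_nat T * c + c \<le> (\<tau>' (Es K) + \<tau>' (Vs 0)) + (of_nat (2 * T) * \<tau>' (Vs K) + 2 * \<tau>' (Vs K))"
            by (rule arith_step[OF k' ih W b _ ctop]) (use Kn nN tn in auto)
          moreover have "of_nat (Suc T) * c = of_nat T * c + c" by (simp add: distrib_right)
          moreover have "of_nat (2 * Suc T) * \<tau>' (Vs K) = of_nat (2 * T) * \<tau>' (Vs K) + 2 * \<tau>' (Vs K)"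
            by (simp add: distrib_right mult_2)
          ultimately show "of_nat (Suc T) * c \<le> \<tau>' (Es K) + \<tau>' (Vs 0) + of_nat (2 * Suc T) * \<tau>' (Vs K)"
            by (simp add: ac_simps)
        qed
        then show ?case using \<tau>'D by blast
      qed
      define m where "m = enn2real (\<nu> UNIV)"
      have m: "\<nu> UNIV = ennreal m" "m \<ge> 0" using fin unfolding m_def
        by (auto simp: less_top ennreal_enn2real_if)
      obtain T :: nat where T: "real T * (e / 4) > 2 * m + 1"
      proof -
        obtain T :: nat where "real T > (2 * m + 1) / (e / 4)" using reals_Archimedean2 by blast
        then have "real T * (e / 4) > 2 * m + 1" using e0 by (simp add: field_simps)
        then show ?thesis by (rule that)
      qed
      obtain \<tau> N where \<tau>D: "\<tau> \<in> D"
        and tc: "\<And>K. K \<ge> N \<Longrightarrow> of_nat T * c \<le> \<tau> (Es K) + \<tau> (Vs 0) + of_nat (2 * T) * \<tau> (Vs K)"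
        using claim[of T] by blast
      define \<epsilon> where "\<epsilon> = 1 / (2 * real T + 1)"
      have \<epsilon>0: "\<epsilon> > 0" unfolding \<epsilon>_def by simp
      obtain K where KN: "K \<ge> N" and tK: "\<tau> (Vs K) < ennreal \<epsilon>"
        using tail_from_bound[OF smono[OF \<tau>D] stail[OF \<tau>D] sfin[OF \<tau>D] \<epsilon>0] by blast
      have "of_nat (2 * T) * \<tau> (Vs K) \<le> of_nat (2 * T) * ennreal \<epsilon>"
        using tK by (intro mult_left_mono) auto
      also have "\<dots> = ennreal (real (2 * T)) * ennreal \<epsilon>"
        by (simp only: ennreal_of_nat_eq_real_of_nat)
      also have "\<dots> = ennreal (real (2 * T) * \<epsilon>)" by (rule ennreal_mult'[symmetric]) simp
      also have "\<dots> \<le> ennreal 1"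
        unfolding \<epsilon>_def by (intro ennreal_leI) (simp add: field_simps)
      finally have t3: "of_nat (2 * T) * \<tau> (Vs K) \<le> 1" by simp
      have t1: "\<tau> (Es K) \<le> \<nu> UNIV"
        using smono[OF \<tau>D] open_Es open_UNIV_J sle[OF \<tau>D open_UNIV_J] unfolding mono_op_def
        by (meson order_trans subset_UNIV)
      have t2: "\<tau> (Vs 0) \<le> \<nu> UNIV"
        using smono[OF \<tau>D] open_Vs open_UNIV_J sle[OF \<tau>D open_UNIV_J] unfolding mono_op_def
        by (meson order_trans subset_UNIV)
      have "of_nat T * c \<le> \<nu> UNIV + \<nu> UNIV + 1"
        using tc[OF KN] t1 t2 t3 by (meson add_mono order_trans)
      also have "\<nu> UNIV + \<nu> UNIV + 1 = ennreal (2 * m + 1)" using m by (simp add: ennreal_plus[symmetric] del: ennreal_plus) (metis ennreal_1 ennreal_plus mult_nonneg_nonneg zero_le_numeral zero_le_one)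
      moreover have "of_nat T * c = ennreal (real T * (e / 4))"
      proof -
        have "of_nat T * c = ennreal (real T) * ennreal (e / 4)" unfolding c_def
          by (simp only: ennreal_of_nat_eq_real_of_nat)
        also have "\<dots> = ennreal (real T * (e / 4))" by (rule ennreal_mult'[symmetric]) simp
        finally show ?thesis .
      qed
      ultimately have le1: "ennreal (real T * (e / 4)) \<le> ennreal (2 * m + 1)" by metis
      have nn: "0 \<le> 2 * m + 1" using m by simp
      have "real T * (e / 4) \<le> 2 * m + 1" using ennreal_le_iff[OF nn] le1 by blast
      then show False using T by simp
    qed
  qed
  show ?thesis using mono modl tail by blast
qed



lemma inv_min: "\<nu> \<in> minimal_vals johnstone_top \<Longrightarrow> mono_op \<nu> \<and> modl \<nu> \<and> small_tail \<nu>"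
proof (induction rule: minimal_vals.induct)
  case (simple n x r)
  then show ?case by (intro inv_simple) auto
next
  case (dsup D)
  then show ?case by (intro inv_dsup) auto
qed

theorem corollary3p14:
  shows "continuous_valuation johnstone_top (\<lambda>U. if U = {} then 0 else 1)
       \<and> point_continuous johnstone_top (\<lambda>U. if U = {} then 0 else 1)
       \<and> \<not> minimal_valuation johnstone_top (\<lambda>U. if U = {} then 0 else 1)"
proof (intro conjI)
  let ?\<mu> = "\<lambda>U::(nat \<times> enat) set. if U = {} then 0 else (1::ennreal)"
  show "continuous_valuation johnstone_top ?\<mu>"
    unfolding continuous_valuation_def valuation_def
  proof (intro conjI allI impI)
    show "?\<mu> {} = 0" by simp
  next
    fix U V :: "(nat \<times> enat) set"
    assume "openin johnstone_top U \<and> openin johnstone_top V \<and> U \<subseteq> V"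
    then show "?\<mu> U \<le> ?\<mu> V" by auto
  next
    fix U V :: "(nat \<times> enat) set"
    assume uv: "openin johnstone_top U \<and> openin johnstone_top V"
    show "?\<mu> U + ?\<mu> V = ?\<mu> (U \<union> V) + ?\<mu> (U \<inter> V)"
    proof (cases "U = {} \<or> V = {}")
      case True
      then show ?thesis by auto
    next
      case False
      then have "U \<inter> V \<noteq> {}" using open_meet uv by blast
      then show ?thesis using False by auto
    qed
  next
    fix \<U> :: "(nat \<times> enat) set set"
    assume a: "\<U> \<noteq> {} \<and> (\<forall>U\<in>\<U>. openin johnstone_top U) \<and> (\<forall>U\<in>\<U>. \<forall>V\<in>\<U>. \<exists>W\<in>\<U>. U \<subseteq> W \<and> V \<subseteq> W)"
    show "?\<mu> (\<Union>\<U>) = (SUP U\<in>\<U>. ?\<mu> U)"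
    proof (cases "\<exists>U\<in>\<U>. U \<noteq> {}")
      case True
      then obtain U0 where U0: "U0 \<in> \<U>" "U0 \<noteq> {}" by blast
      have "(SUP U\<in>\<U>. ?\<mu> U) = 1"
      proof (rule antisym)
        show "(SUP U\<in>\<U>. ?\<mu> U) \<le> 1" by (rule SUP_least) auto
        have "?\<mu> U0 \<le> (SUP U\<in>\<U>. ?\<mu> U)" using U0(1) by (rule SUP_upper)
        then show "1 \<le> (SUP U\<in>\<U>. ?\<mu> U)" using U0 by simp
      qed
      moreover have "\<Union>\<U> \<noteq> {}" using U0 by blast
      ultimately show ?thesis by simp
    next
      case False
      then have "\<Union>\<U> = {}" by blast
      moreover have "(SUP U\<in>\<U>. ?\<mu> U) = 0" using False a by simp
      ultimately show ?thesis by simp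
    qed
  qed
  show "point_continuous johnstone_top ?\<mu>"
    unfolding point_continuous_def
  proof (intro allI impI)
    fix U :: "(nat \<times> enat) set" and r :: real
    assume a: "openin johnstone_top U \<and> 0 \<le> r \<and> ennreal r < ?\<mu> U"
    then have ne: "U \<noteq> {}" by (cases "U = {}") auto
    then obtain x where x: "x \<in> U" by blast
    have r1: "ennreal r < 1" using a ne by simp
    show "\<exists>A. finite A \<and> A \<subseteq> U \<and> (\<forall>V. openin johnstone_top V \<and> A \<subseteq> V \<longrightarrow> ennreal r < ?\<mu> V)"
    proof (intro exI[of _ "{x}"] conjI allI impI)
      show "finite {x}" by simp
      show "{x} \<subseteq> U" using x by simp
      fix V :: "(nat \<times> enat) set" assume "openin johnstone_top V \<and> {x} \<subseteq> V"
      then have "V \<noteq> {}" by blast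
      then show "ennreal r < ?\<mu> V" using r1 by simp
    qed
  qed
  show "\<not> minimal_valuation johnstone_top ?\<mu>"
  proof
    assume "minimal_valuation johnstone_top ?\<mu>"
    then have "vrestrict johnstone_top ?\<mu> \<in> minimal_vals johnstone_top"
      unfolding minimal_valuation_def .
    then have st: "small_tail (vrestrict johnstone_top ?\<mu>)" using inv_min by blast
    have "vrestrict johnstone_top ?\<mu> UNIV = 1" unfolding vrestrict_def using open_UNIV_J by simp
    then have "vrestrict johnstone_top ?\<mu> UNIV < top" by simp
    then have "\<forall>e>0. \<exists>n. vrestrict johnstone_top ?\<mu> (Vs n) < ennreal e"
      using st unfolding small_tail_def by blast
    then have "\<exists>n. vrestrict johnstone_top ?\<mu> (Vs n) < ennreal (1/2)"
      by (rule allE[where x="1/2"]) simp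
    then obtain n where "vrestrict johnstone_top ?\<mu> (Vs n) < ennreal (1/2)" by blast
    moreover have "vrestrict johnstone_top ?\<mu> (Vs n) = 1"
      unfolding vrestrict_def using open_Vs Vs_nonempty[of n] by auto
    moreover have "ennreal (1/2) \<le> ennreal 1" by (rule ennreal_leI) simp
    ultimately show False by (metis ennreal_1 not_less)
  qed
qed

end
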